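(* Let $T$ be a complete first-order theory in a countable language with monster model $\mathfrak{C}$. For every countable set $A\subseteq\mathfrak{C}$ there is a nice (countable) model $M\prec\mathfrak{C}$ with $A\subseteq M$. In particular, nice models exist.
   Context: $\mathfrak{C}$ is a $\kappa$-saturated, $\kappa$-homogeneous model of $T$ for some $\kappa\geq(2^{|T|})^{+}$; "small" means of cardinality $<\kappa$. The Lascar graph on $\mathfrak{C}^{k}$ joins two distinct tuples lying on a common infinite indiscernible sequence (over $\emptyset$); $d_{k}$ is its graph distance and $\equiv_{L}^{k}$ has as classes its connected components. $\operatorname{Aut}f_{L}(\mathfrak{C})$ is the group generated by automorphisms of $\mathfrak{C}$ fixing pointwise some small elementary substructure. A natural number $m$ bounds $\sigma\in\operatorname{Aut}f_{L}(\mathfrak{C})$ if $d(c,\sigma(c))\leq m$ for every tuple $c$ (of any length). A countable model $M$ is nice if: (1) for all finite tuples $a,b\in M^{k}$ with $a\equiv_{L}^{k}b$ there is $\sigma\in\operatorname{Aut}f_{L}(\mathfrak{C})$ with $\sigma\restriction M\in\operatorname{Aut}(M)$ and $\sigma(a)=b$, whose minimal bound is minimal among all elements of $\operatorname{Aut}f_{L}(\mathfrak{C})$ mapping $a$ to $b$; (2) for every $a\in M^{k}$ and $n<\omega$, if there are $c_{1},c_{2}\in\mathfrak{C}^{k}$ with $c_{1}\equiv_{L}^{k}a\equiv_{L}^{k}c_{2}$ and $d_{k}(c_{1},c_{2})>n$, then there are such $c_{1},c_{2}$ in $M^{k}$; (3) for all $a,b\in M^{k}$, $a'\in M^{k'}$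 and $n<\omega$, if there is $b'$ with $d_{k+k'}(a^{\frown}a',b^{\frown}b')\leq n$ then there is such $b'\in M^{k'}$. *)

theory Defs
  imports Main "HOL-Library.Countable_Set"
begin

datatype 'f trm = Var nat | Fn 'f "'f trm list"

datatype ('f, 'r) fm =
    FF
  | Eq "'f trm" "'f trm"
  | Rel 'r "'f trm list"
  | Neg "('f, 'r) fm"
  | Conj "('f, 'r) fm" "('f, 'r) fm"
  | Ex nat "('f, 'r) fm"

text \<open>A structure for a language: arities of function / relation symbols and their
  interpretations on the universe (the universe of the monster model is the whole type 'a).\<close>
record ('f, 'r, 'a) mstruct =
  arf :: "'f \<Rightarrow> nat"
  arr :: "'r \<Rightarrow> nat"
  Fi  :: "'f \<Rightarrow> 'a list \<Rightarrow> 'a"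
  Ri  :: "'r \<Rightarrow> 'a list \<Rightarrow> bool"

fun wft :: "('f \<Rightarrow> nat) \<Rightarrow> 'f trm \<Rightarrow> bool" where
  "wft af (Var n) = True"
| "wft af (Fn f ts) = (length ts = af f \<and> (\<forall>t\<in>set ts. wft af t))"

fun wf :: "('f, 'r, 'a, 'z) mstruct_scheme \<Rightarrow> ('f, 'r) fm \<Rightarrow> bool" where
  "wf S FF = True"
| "wf S (Eq s t) = (wft (arf S) s \<and> wft (arf S) t)"
| "wf S (Rel r ts) = (length ts = arr S r \<and> (\<forall>t\<in>set ts. wft (arf S) t))"
| "wf S (Neg p) = wf S p"
| "wf S (Conj p q) = (wf S p \<and> wf S q)"
| "wf S (Ex n p) = wf S p"

fun fvt :: "'f trm \<Rightarrow> nat set" where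
  "fvt (Var n) = {n}"
| "fvt (Fn f ts) = (\<Union>t\<in>set ts. fvt t)"

fun fv :: "('f, 'r) fm \<Rightarrow> nat set" where
  "fv FF = {}"
| "fv (Eq s t) = fvt s \<union> fvt t"
| "fv (Rel r ts) = (\<Union>t\<in>set ts. fvt t)"
| "fv (Neg p) = fv p"
| "fv (Conj p q) = fv p \<union> fv q"
| "fv (Ex n p) = fv p - {n}"

fun evalt :: "('f \<Rightarrow> 'a list \<Rightarrow> 'a) \<Rightarrow> (nat \<Rightarrow> 'a) \<Rightarrow> 'f trm \<Rightarrow> 'a" where
  "evalt F v (Var n) = v n"
| "evalt F v (Fn f ts) = F f (map (evalt F v) ts)"

text \<open>Satisfaction, with quantifiers ranging over the domain D (D = UNIV: the monster model;
  D = M: the substructure M).\<close>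
fun sat :: "('f, 'r, 'a, 'z) mstruct_scheme \<Rightarrow> 'a set \<Rightarrow> ('f, 'r) fm \<Rightarrow> (nat \<Rightarrow> 'a) \<Rightarrow> bool" where
  "sat S D FF v = False"
| "sat S D (Eq s t) v = (evalt (Fi S) v s = evalt (Fi S) v t)"
| "sat S D (Rel r ts) v = Ri S r (map (evalt (Fi S) v) ts)"
| "sat S D (Neg p) v = (\<not> sat S D p v)"
| "sat S D (Conj p q) v = (sat S D p v \<and> sat S D q v)"
| "sat S D (Ex n p) v = (\<exists>x\<in>D. sat S D p (v(n := x)))"

definition elem_sub :: "('f, 'r, 'a, 'z) mstruct_scheme \<Rightarrow> 'a set \<Rightarrow> bool" where
  "elem_sub S M \<longleftrightarrow> M \<noteq> {}
     \<and> (\<forall>f xs. length xs = arf S f \<longrightarrow> set xs \<subseteq> M \<longrightarrow> Fi S f xs \<in> M)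
     \<and> (\<forall>\<phi> v. wf S \<phi> \<longrightarrow> (\<forall>n. v n \<in> M) \<longrightarrow> (sat S M \<phi> v \<longleftrightarrow> sat S UNIV \<phi> v))"

definition is_aut :: "('f, 'r, 'a, 'z) mstruct_scheme \<Rightarrow> ('a \<Rightarrow> 'a) \<Rightarrow> bool" where
  "is_aut S \<sigma> \<longleftrightarrow> bij \<sigma>
     \<and> (\<forall>f xs. length xs = arf S f \<longrightarrow> \<sigma> (Fi S f xs) = Fi S f (map \<sigma> xs))
     \<and> (\<forall>r xs. length xs = arr S r \<longrightarrow> (Ri S r (map \<sigma> xs) \<longleftrightarrow> Ri S r xs))"

text \<open>"small": cardinality strictly less than kappa = |K|.\<close>
definition small :: "'k set \<Rightarrow> 'a set \<Rightarrow> bool" where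
  "small K X \<longleftrightarrow> (card_of X, card_of K) \<in> ordLess"

text \<open>A type over A is a set of pairs (formula, assignment) where the free variables other than 0
  are assigned elements of A; variable 0 is the type variable.\<close>
definition saturated :: "('f, 'r, 'a, 'z) mstruct_scheme \<Rightarrow> 'k set \<Rightarrow> bool" where
  "saturated S K \<longleftrightarrow> (\<forall>A \<Phi>. small K A \<longrightarrow>
     \<Phi> \<subseteq> {(\<phi>, v). wf S \<phi> \<and> (\<forall>n\<in>fv \<phi> - {0}. v n \<in> A)} \<longrightarrow>
     (\<forall>\<Phi>0\<subseteq>\<Phi>. finite \<Phi>0 \<longrightarrow> (\<exists>b. \<forall>(\<phi>, v)\<in>\<Phi>0. sat S UNIV \<phi> (v(0 := b)))) \<longrightarrow>
     (\<exists>b. \<forall>(\<phi>, v)\<in>\<Phi>. sat S UNIV \<phi> (v(0 := b))))"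

definition homogeneous :: "('f, 'r, 'a, 'z) mstruct_scheme \<Rightarrow> 'k set \<Rightarrow> bool" where
  "homogeneous S K \<longleftrightarrow> (\<forall>A g. small K A \<longrightarrow>
     (\<forall>\<phi> v. wf S \<phi> \<longrightarrow> (\<forall>n\<in>fv \<phi>. v n \<in> A) \<longrightarrow> (sat S UNIV \<phi> v \<longleftrightarrow> sat S UNIV \<phi> (g \<circ> v))) \<longrightarrow>
     (\<exists>\<sigma>. is_aut S \<sigma> \<and> (\<forall>x\<in>A. \<sigma> x = g x)))"

definition monster :: "('f, 'r, 'a, 'z) mstruct_scheme \<Rightarrow> 'k set \<Rightarrow> bool" where
  "monster S K \<longleftrightarrow>
     (cardSuc (card_of (Pow {\<phi>. wf S \<phi>})), card_of K) \<in> ordLeq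
     \<and> saturated S K \<and> homogeneous S K"

definition indisc :: "('f, 'r, 'a, 'z) mstruct_scheme \<Rightarrow> nat \<Rightarrow> (nat \<Rightarrow> 'a list) \<Rightarrow> bool" where
  "indisc S k a \<longleftrightarrow> (\<forall>i. length (a i) = k) \<and>
     (\<forall>\<phi> is js. wf S \<phi> \<longrightarrow> sorted_wrt (<) is \<longrightarrow> sorted_wrt (<) js \<longrightarrow>
        length is = length js \<longrightarrow> fv \<phi> \<subseteq> {..< k * length is} \<longrightarrow>
        (sat S UNIV \<phi> (\<lambda>n. concat (map a is) ! n) \<longleftrightarrow> sat S UNIV \<phi> (\<lambda>n. concat (map a js) ! n)))"

definition ledge :: "('f, 'r, 'a, 'z) mstruct_scheme \<Rightarrow> nat \<Rightarrow> 'a list \<Rightarrow> 'a list \<Rightarrow> bool" where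
  "ledge S k c d \<longleftrightarrow> c \<noteq> d \<and> (\<exists>a i j. indisc S k a \<and> a i = c \<and> a j = d)"

text \<open>lpath S k n c d  iff  d_k(c, d) <= n.\<close>
fun lpath :: "('f, 'r, 'a, 'z) mstruct_scheme \<Rightarrow> nat \<Rightarrow> nat \<Rightarrow> 'a list \<Rightarrow> 'a list \<Rightarrow> bool" where
  "lpath S k 0 c d = (c = d)"
| "lpath S k (Suc n) c d = (lpath S k n c d \<or> (\<exists>e. length e = k \<and> lpath S k n c e \<and> ledge S k e d))"

definition lascar_eq :: "('f, 'r, 'a, 'z) mstruct_scheme \<Rightarrow> nat \<Rightarrow> 'a list \<Rightarrow> 'a list \<Rightarrow> bool" where
  "lascar_eq S k c d \<longleftrightarrow> (\<exists>n. lpath S k n c d)"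

inductive_set Autf :: "('f, 'r, 'a, 'z) mstruct_scheme \<Rightarrow> 'k set \<Rightarrow> ('a \<Rightarrow> 'a) set"
  for S :: "('f, 'r, 'a, 'z) mstruct_scheme" and K :: "'k set" where
  gen: "\<lbrakk>is_aut S \<sigma>; elem_sub S N; small K N; \<forall>x\<in>N. \<sigma> x = x\<rbrakk> \<Longrightarrow> \<sigma> \<in> Autf S K"
| ident: "id \<in> Autf S K"
| comp: "\<lbrakk>\<sigma> \<in> Autf S K; \<tau> \<in> Autf S K\<rbrakk> \<Longrightarrow> \<sigma> \<circ> \<tau> \<in> Autf S K"
| inverse: "\<sigma> \<in> Autf S K \<Longrightarrow> inv \<sigma> \<in> Autf S K"

definition bounds :: "('f, 'r, 'a, 'z) mstruct_scheme \<Rightarrow> nat \<Rightarrow> ('a \<Rightarrow> 'a) \<Rightarrow> bool" where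
  "bounds S m \<sigma> \<longleftrightarrow> (\<forall>c. lpath S (length c) m c (map \<sigma> c))"

definition nice :: "('f, 'r, 'a, 'z) mstruct_scheme \<Rightarrow> 'k set \<Rightarrow> 'a set \<Rightarrow> bool" where
  "nice S K M \<longleftrightarrow> elem_sub S M \<and> countable M
   \<and> (\<forall>a b. set a \<subseteq> M \<longrightarrow> set b \<subseteq> M \<longrightarrow> length a = length b \<longrightarrow> lascar_eq S (length a) a b \<longrightarrow>
        (\<exists>\<sigma>\<in>Autf S K. \<sigma> ` M = M \<and> map \<sigma> a = b \<and>
           (\<forall>\<tau>\<in>Autf S K. map \<tau> a = b \<longrightarrow> (\<forall>m. bounds S m \<tau> \<longrightarrow> bounds S m \<sigma>))))
   \<and> (\<forall>a n. set a \<subseteq> M \<longrightarrow>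
        (\<exists>c1 c2. length c1 = length a \<and> length c2 = length a \<and> lascar_eq S (length a) c1 a
            \<and> lascar_eq S (length a) a c2 \<and> \<not> lpath S (length a) n c1 c2) \<longrightarrow>
        (\<exists>c1 c2. set c1 \<subseteq> M \<and> set c2 \<subseteq> M \<and> length c1 = length a \<and> length c2 = length a
            \<and> lascar_eq S (length a) c1 a \<and> lascar_eq S (length a) a c2 \<and> \<not> lpath S (length a) n c1 c2))
   \<and> (\<forall>a b a' n. set a \<subseteq> M \<longrightarrow> set b \<subseteq> M \<longrightarrow> set a' \<subseteq> M \<longrightarrow> length a = length b \<longrightarrow>
        (\<exists>b'. length b' = length a' \<and> lpath S (length a + length a') n (a @ a') (b @ b')) \<longrightarrow>
        (\<exists>b'. set b' \<subseteq> M \<and> length b' = length a' \<and> lpath S (length a + length a') n (a @ a') (b @ b')))"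

end

theory Submission
  imports Defs "HOL-Library.Countable"
begin


lemma finite_fvt: "finite (fvt t)"
  by (induction t) auto

lemma finite_fv: "finite (fv \<phi>)"
  by (induction \<phi>) (auto simp: finite_fvt)

lemma evalt_cong: "(\<forall>n\<in>fvt t. v n = v' n) \<Longrightarrow> evalt F v t = evalt F v' t"
  by (induction t) (auto intro!: arg_cong[where f="F _"] map_cong)

lemma sat_cong: "(\<forall>n\<in>fv \<phi>. v n = v' n) \<Longrightarrow> sat S D \<phi> v = sat S D \<phi> v'"
proof (induction \<phi> arbitrary: v v')
  case (Eq s t) then show ?case using evalt_cong[of s v v'] evalt_cong[of t v v'] by auto
next
  case (Rel r ts)
  have "map (evalt (Fi S) v) ts = map (evalt (Fi S) v') ts"
    using Rel by (auto intro!: evalt_cong map_cong)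
  then show ?case by (metis sat.simps(3))
next
  case (Ex n p)
  have "\<And>x. sat S D p (v(n:=x)) = sat S D p (v'(n:=x))"
    using Ex.prems by (intro Ex.IH) auto
  then show ?case by simp
next
  case (Conj p q)
  have "sat S D p v = sat S D p v'" "sat S D q v = sat S D q v'"
    using Conj.prems by (auto intro!: Conj.IH)
  then show ?case by simp
qed auto

fun renamet :: "(nat \<Rightarrow> nat) \<Rightarrow> 'f trm \<Rightarrow> 'f trm" where
  "renamet \<rho> (Var n) = Var (\<rho> n)"
| "renamet \<rho> (Fn f ts) = Fn f (map (renamet \<rho>) ts)"

definition fresh :: "nat set \<Rightarrow> nat" where
  "fresh F = Suc (Max (insert 0 F))"

lemma fresh_notin: "finite F \<Longrightarrow> fresh F \<notin> F"
  unfolding fresh_def by (metis Max_ge Suc_n_not_le_n finite_insert insertCI)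

fun vsubst :: "(nat \<Rightarrow> nat) \<Rightarrow> ('f, 'r) fm \<Rightarrow> ('f, 'r) fm" where
  "vsubst \<rho> FF = FF"
| "vsubst \<rho> (Eq s t) = Eq (renamet \<rho> s) (renamet \<rho> t)"
| "vsubst \<rho> (Rel r ts) = Rel r (map (renamet \<rho>) ts)"
| "vsubst \<rho> (Neg p) = Neg (vsubst \<rho> p)"
| "vsubst \<rho> (Conj p q) = Conj (vsubst \<rho> p) (vsubst \<rho> q)"
| "vsubst \<rho> (Ex n p) = (let m = fresh (\<rho> ` (fv p - {n})) in Ex m (vsubst (\<rho>(n:=m)) p))"

lemma evalt_renamet: "evalt F u (renamet \<rho> t) = evalt F (u \<circ> \<rho>) t"
  by (induction t) (auto intro!: arg_cong[where f="F _"] map_cong)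

lemma fvt_renamet: "fvt (renamet \<rho> t) = \<rho> ` fvt t"
  by (induction t) auto

lemma wft_renamet: "wft af (renamet \<rho> t) = wft af t"
  by (induction t) auto

lemma wf_vsubst: "wf S (vsubst \<rho> \<phi>) = wf S \<phi>"
  by (induction \<phi> arbitrary: \<rho>) (auto simp: wft_renamet Let_def)

lemma fv_vsubst: "fv (vsubst \<rho> \<phi>) \<subseteq> \<rho> ` fv \<phi>"
proof (induction \<phi> arbitrary: \<rho>)
  case (Ex n p)
  define m where "m = fresh (\<rho> ` (fv p - {n}))"
  have ih: "fv (vsubst (\<rho>(n := m)) p) \<subseteq> (\<rho>(n := m)) ` fv p" by (rule Ex.IH)
  have "fv (vsubst (\<rho>(n := m)) p) - {m} \<subseteq> \<rho> ` (fv p - {n})"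
  proof
    fix x assume x: "x \<in> fv (vsubst (\<rho>(n := m)) p) - {m}"
    then obtain z where "z \<in> fv p" "x = (\<rho>(n := m)) z" using ih by blast
    with x show "x \<in> \<rho> ` (fv p - {n})" by (cases "z = n") auto
  qed
  then show ?case by (simp add: Let_def m_def[symmetric])
next
  case (Conj p q) then show ?case by (metis Un_mono fv.simps(5) image_Un vsubst.simps(5))
qed (auto simp: fvt_renamet)

lemma sat_vsubst: "sat S D (vsubst \<rho> \<phi>) u = sat S D \<phi> (u \<circ> \<rho>)"
proof (induction \<phi> arbitrary: \<rho> u)
  case (Eq s t) then show ?case by (simp add: evalt_renamet comp_def)
next
  case (Rel r ts) then show ?case by (simp add: evalt_renamet comp_def)
next
  case (Ex n p)
  define m where "m = fresh (\<rho> ` (fv p - {n}))"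
  have mf: "m \<notin> \<rho> ` (fv p - {n})" unfolding m_def by (rule fresh_notin) (simp add: finite_fv)
  have "\<And>x. sat S D (vsubst (\<rho>(n:=m)) p) (u(m:=x)) = sat S D p ((u \<circ> \<rho>)(n:=x))"
  proof -
    fix x
    have "sat S D (vsubst (\<rho>(n:=m)) p) (u(m:=x)) = sat S D p (u(m:=x) \<circ> \<rho>(n:=m))"
      by (rule Ex.IH)
    also have "\<dots> = sat S D p ((u \<circ> \<rho>)(n:=x))"
      by (rule sat_cong) (use mf in auto)
    finally show "sat S D (vsubst (\<rho>(n:=m)) p) (u(m:=x)) = sat S D p ((u \<circ> \<rho>)(n:=x))" .
  qed
  then show ?case by (simp add: Let_def m_def[symmetric] comp_def)
qed auto

fun Exs :: "nat list \<Rightarrow> ('f, 'r) fm \<Rightarrow> ('f, 'r) fm" where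
  "Exs [] p = p"
| "Exs (x # xs) p = Ex x (Exs xs p)"

lemma sat_Exs: "sat S UNIV (Exs xs p) u \<longleftrightarrow> (\<exists>w. sat S UNIV p (\<lambda>n. if n \<in> set xs then w n else u n))"
proof (induction xs arbitrary: u)
  case Nil then show ?case by simp
next
  case (Cons x xs)
  show ?case
  proof
    assume "sat S UNIV (Exs (x # xs) p) u"
    then obtain y w where "sat S UNIV p (\<lambda>n. if n \<in> set xs then w n else (u(x:=y)) n)"
      using Cons by auto
    then have "sat S UNIV p (\<lambda>n. if n \<in> set (x#xs) then (\<lambda>n. if n \<in> set xs then w n else y) n else u n)"
      by (rule rev_iffD1[OF _ sat_cong]) auto
    then show "\<exists>w. sat S UNIV p (\<lambda>n. if n \<in> set (x#xs) then w n else u n)"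
      by (rule exI[where x="\<lambda>n. if n \<in> set xs then w n else y"])
  next
    assume "\<exists>w. sat S UNIV p (\<lambda>n. if n \<in> set (x#xs) then w n else u n)"
    then obtain w where w: "sat S UNIV p (\<lambda>n. if n \<in> set (x#xs) then w n else u n)" by blast
    have "sat S UNIV p (\<lambda>n. if n \<in> set xs then w n else (u(x:=w x)) n)"
      by (rule rev_iffD1[OF w sat_cong]) auto
    then show "sat S UNIV (Exs (x # xs) p) u" using Cons by auto
  qed
qed

lemma fv_Exs: "fv (Exs xs p) = fv p - set xs"
  by (induction xs) auto

lemma wf_Exs: "wf S (Exs xs p) = wf S p"
  by (induction xs) auto

fun conjs :: "('f, 'r) fm list \<Rightarrow> ('f, 'r) fm" where
  "conjs [] = Neg FF"
| "conjs (p # ps) = Conj p (conjs ps)"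

lemma sat_conjs: "sat S D (conjs ps) u \<longleftrightarrow> (\<forall>p\<in>set ps. sat S D p u)"
  by (induction ps) auto

lemma wf_conjs: "wf S (conjs ps) \<longleftrightarrow> (\<forall>p\<in>set ps. wf S p)"
  by (induction ps) auto

lemma fv_conjs: "fv (conjs ps) = (\<Union>p\<in>set ps. fv p)"
  by (induction ps) auto

definition Iff :: "('f, 'r) fm \<Rightarrow> ('f, 'r) fm \<Rightarrow> ('f, 'r) fm" where
  "Iff p q = Conj (Neg (Conj p (Neg q))) (Neg (Conj q (Neg p)))"

lemma sat_Iff[simp]: "sat S D (Iff p q) u \<longleftrightarrow> (sat S D p u \<longleftrightarrow> sat S D q u)"
  unfolding Iff_def by auto

lemma wf_Iff[simp]: "wf S (Iff p q) \<longleftrightarrow> wf S p \<and> wf S q"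
  unfolding Iff_def by auto



unbundle cardinal_syntax

instance trm :: (countable) countable by countable_datatype
instance fm :: (countable, countable) countable by countable_datatype

lemma countable_fm:
  assumes "countable (UNIV :: 'f set)" "countable (UNIV :: 'r set)"
  shows "countable (UNIV :: ('f, 'r) fm set)"
proof -
  have i1: "inj (to_nat_on (UNIV :: 'f set))" using assms by (simp add: inj_on_to_nat_on)
  have i2: "inj (to_nat_on (UNIV :: 'r set))" using assms by (simp add: inj_on_to_nat_on)
  have "inj (map_fm (to_nat_on (UNIV :: 'f set)) (to_nat_on (UNIV :: 'r set)))"
    using fm.inj_map[OF i1 i2] .
  then show ?thesis
    by (rule countable_image_inj_on[OF countableI_type])
qed

lemma small_countable:
  fixes S :: "('f, 'r, 'a, 'z) mstruct_scheme"
  assumes "(cardSuc (card_of (Pow {\<phi>. wf S \<phi>})), card_of K) \<in> ordLeq" "countable X"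
  shows "small K X"
proof -
  let ?W = "{\<phi>. wf S \<phi>}"
  define f :: "_ \<Rightarrow> ('f, 'r) fm" where "f x = Eq (Var (to_nat_on X x)) (Var 0)" for x
  have "inj_on f X" using assms(2) unfolding f_def inj_on_def by (auto dest: inj_on_to_nat_on[THEN inj_onD])
  moreover have "f ` X \<subseteq> ?W" unfolding f_def by auto
  ultimately have 1: "|X| \<le>o |?W|" using card_of_ordLeq by blast
  have 2: "|?W| <o |Pow ?W|" by (rule card_of_Pow)
  have 3: "|Pow ?W| <o cardSuc |Pow ?W|" by (rule cardSuc_greater[OF card_of_Card_order])
  have "|?W| <o cardSuc |Pow ?W|" using 2 3 by (rule ordLess_transitive)
  then have "|X| <o cardSuc |Pow ?W|" using 1 by (metis ordLeq_ordLess_trans)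
  then show ?thesis unfolding small_def using assms(1) ordLess_ordLeq_trans by blast
qed

lemma evalt_aut:
  assumes "is_aut S \<sigma>" "wft (arf S) t"
  shows "evalt (Fi S) (\<lambda>n. \<sigma> (v n)) t = \<sigma> (evalt (Fi S) v t)"
  using assms(2)
proof (induction t)
  case (Var n) then show ?case by simp
next
  case (Fn f ts)
  have "map (evalt (Fi S) (\<lambda>n. \<sigma> (v n))) ts = map \<sigma> (map (evalt (Fi S) v) ts)"
    using Fn by auto
  moreover have "length (map (evalt (Fi S) v) ts) = arf S f" using Fn by simp
  ultimately show ?case using assms(1) unfolding is_aut_def by (simp only: evalt.simps)
qed

lemma sat_aut:
  assumes "is_aut S \<sigma>" "wf S \<phi>"
  shows "sat S (\<sigma> ` D) \<phi> (\<lambda>n. \<sigma> (v n)) = sat S D \<phi> v"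
  using assms(2)
proof (induction \<phi> arbitrary: v)
  case (Eq s t)
  have "inj \<sigma>" using assms(1) unfolding is_aut_def bij_def by simp
  then show ?case using Eq by (simp add: evalt_aut[OF assms(1)] inj_eq)
next
  case (Rel r ts)
  have "map (evalt (Fi S) (\<lambda>n. \<sigma> (v n))) ts = map \<sigma> (map (evalt (Fi S) v) ts)"
    using Rel by (auto simp: evalt_aut[OF assms(1)])
  moreover have "length (map (evalt (Fi S) v) ts) = arr S r" using Rel by simp
  ultimately show ?case using assms(1) unfolding is_aut_def by (simp only: sat.simps)
next
  case (Ex n p)
  have eq: "\<And>y. (\<lambda>m. \<sigma> (v m))(n := \<sigma> y) = (\<lambda>m. \<sigma> ((v(n := y)) m))" by auto
  have "(\<exists>x\<in>\<sigma> ` D. sat S (\<sigma> ` D) p ((\<lambda>m. \<sigma> (v m))(n := x)))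
     = (\<exists>y\<in>D. sat S (\<sigma> ` D) p ((\<lambda>m. \<sigma> (v m))(n := \<sigma> y)))" by blast
  also have "\<dots> = (\<exists>y\<in>D. sat S (\<sigma> ` D) p (\<lambda>m. \<sigma> ((v(n := y)) m)))" by (simp only: eq)
  also have "\<dots> = (\<exists>y\<in>D. sat S D p (v(n := y)))" using Ex by (simp only: wf.simps)
  finally have "(\<exists>x\<in>\<sigma> ` D. sat S (\<sigma> ` D) p ((\<lambda>m. \<sigma> (v m))(n := x))) = (\<exists>y\<in>D. sat S D p (v(n := y)))" .
  then show ?case by simp
qed auto

lemma sat_aut_UNIV:
  assumes "is_aut S \<sigma>" "wf S \<phi>"
  shows "sat S UNIV \<phi> (\<lambda>n. \<sigma> (v n)) = sat S UNIV \<phi> v"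
proof -
  have "\<sigma> ` UNIV = UNIV" using assms(1) unfolding is_aut_def bij_def by simp
  then show ?thesis using sat_aut[OF assms, of UNIV v] by simp
qed

lemma is_aut_inv:
  assumes "is_aut S \<sigma>"
  shows "is_aut S (inv \<sigma>)"
proof -
  have b: "bij \<sigma>" using assms unfolding is_aut_def by simp
  have mi: "map \<sigma> (map (inv \<sigma>) xs) = xs" for xs using b by (simp add: bij_is_surj surj_f_inv_f map_idI)
  have "inv \<sigma> (Fi S f xs) = Fi S f (map (inv \<sigma>) xs)" if "length xs = arf S f" for f xs
  proof -
    have "\<sigma> (Fi S f (map (inv \<sigma>) xs)) = Fi S f xs"
      using assms that mi unfolding is_aut_def by (metis length_map)
    then show ?thesis using b by (metis bij_inv_eq_iff)
  qed
  moreover have "Ri S r (map (inv \<sigma>) xs) = Ri S r xs" if "length xs = arr S r" for r xs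
    using assms that mi unfolding is_aut_def by (metis length_map)
  ultimately show ?thesis using b unfolding is_aut_def by (simp add: bij_imp_bij_inv)
qed

lemma elem_sub_aut:
  assumes "is_aut S h" "elem_sub S M"
  shows "elem_sub S (h ` M)"
proof -
  have b: "bij h" using assms unfolding is_aut_def by simp
  have hi: "h (inv h x) = x" for x using b by (simp add: bij_is_surj surj_f_inv_f)
  have ih: "inv h (h x) = x" for x using b by (simp add: bij_is_inj)
  have "Fi S f xs \<in> h ` M" if "length xs = arf S f" "set xs \<subseteq> h ` M" for f xs
  proof -
    let ?ys = "map (inv h) xs"
    have ys: "set ?ys \<subseteq> M" using that(2) ih by auto
    have "xs = map h ?ys" using hi by (simp add: map_idI)
    then have "Fi S f xs = h (Fi S f ?ys)" using assms(1) that(1) unfolding is_aut_def by (metis length_map)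
    moreover have "Fi S f ?ys \<in> M" using assms(2) ys that(1) unfolding elem_sub_def by simp
    ultimately show ?thesis by simp
  qed
  moreover have "sat S (h ` M) \<phi> v = sat S UNIV \<phi> v" if "wf S \<phi>" "\<forall>n. v n \<in> h ` M" for \<phi> v
  proof -
    let ?v0 = "inv h \<circ> v"
    have v: "v = h \<circ> ?v0" using hi by auto
    have v0: "\<forall>n. ?v0 n \<in> M"
    proof
      fix n obtain y where "y \<in> M" "v n = h y" using \<open>\<forall>n. v n \<in> h ` M\<close> by blast
      then show "?v0 n \<in> M" by (simp add: ih)
    qed
    have "sat S (h ` M) \<phi> v = sat S M \<phi> ?v0" using sat_aut[OF assms(1) that(1), of M ?v0] hi by simp
    also have "\<dots> = sat S UNIV \<phi> ?v0" using assms(2) that(1) v0 unfolding elem_sub_def by simp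
    also have "\<dots> = sat S UNIV \<phi> v" using sat_aut_UNIV[OF assms(1) that(1), of ?v0] hi by simp
    finally show ?thesis .
  qed
  ultimately show ?thesis using assms(2) unfolding elem_sub_def by auto
qed

lemma Autf_bij: "\<sigma> \<in> Autf S K \<Longrightarrow> bij \<sigma>"
proof (induction rule: Autf.induct)
  case (comp \<sigma> \<tau>) then show ?case using bij_comp[of \<tau> \<sigma>] by (simp add: comp_def)
qed (auto simp: is_aut_def bij_imp_bij_inv bij_id[unfolded id_def])

lemma lpath_mono: "lpath S k m c d \<Longrightarrow> m \<le> m' \<Longrightarrow> lpath S k m' c d"
  by (induction m' ) (auto simp: le_Suc_eq)




definition ov :: "nat \<Rightarrow> (nat \<Rightarrow> 'a) \<Rightarrow> (nat \<Rightarrow> 'a) \<Rightarrow> nat \<Rightarrow> 'a" where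
  "ov m w v = (\<lambda>n. if n < m then w n else v n)"

lemma collect_lists:
  assumes "finite F" "\<forall>x\<in>F. \<exists>ps. P ps x \<and> set ps \<subseteq> \<Phi>"
  shows "\<exists>all. set all \<subseteq> \<Phi> \<and> (\<forall>x\<in>F. \<exists>ps. P ps x \<and> set ps \<subseteq> set all)"
  using assms
proof (induction F rule: finite_induct)
  case empty then show ?case by (intro exI[of _ "[]"]) auto
next
  case (insert x F)
  then obtain all where all: "set all \<subseteq> \<Phi>" "\<forall>x\<in>F. \<exists>ps. P ps x \<and> set ps \<subseteq> set all" by auto
  obtain ps where ps: "P ps x" "set ps \<subseteq> \<Phi>" using insert.prems by auto
  show ?case using all ps by (intro exI[of _ "all @ ps"]) fastforce
qed

definition swp :: "nat \<Rightarrow> nat \<Rightarrow> nat" where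
  "swp m n = (if n = 0 then m else if n = m then 0 else n)"

lemma realize:
  fixes S :: "('f, 'r, 'a, 'z) mstruct_scheme"
  assumes satu: "saturated S K" and csmall: "\<And>X::'a set. countable X \<Longrightarrow> small K X"
  shows "countable A \<Longrightarrow> (\<forall>n\<ge>m. v n \<in> A) \<Longrightarrow> (\<forall>\<phi>\<in>\<Phi>. wf S \<phi>) \<Longrightarrow>
    (\<forall>ps. set ps \<subseteq> \<Phi> \<longrightarrow> (\<exists>w. \<forall>\<phi>\<in>set ps. sat S UNIV \<phi> (ov m w v))) \<Longrightarrow>
    \<exists>w. \<forall>\<phi>\<in>\<Phi>. sat S UNIV \<phi> (ov m w v)"
proof (induction m arbitrary: v A)
  case 0
  have "\<forall>\<phi>\<in>\<Phi>. sat S UNIV \<phi> v"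
  proof
    fix \<phi> assume "\<phi> \<in> \<Phi>"
    then obtain w where "sat S UNIV \<phi> (ov 0 w v)" using "0.prems"(4)[rule_format, of "[\<phi>]"] by auto
    then show "sat S UNIV \<phi> v" by (simp add: ov_def)
  qed
  then show ?case by (simp add: ov_def)
next
  case (Suc m)
  let ?\<pi> = "swp m"
  define \<psi> :: "('f, 'r) fm list \<Rightarrow> ('f, 'r) fm" where "\<psi> ps = Exs [0..<m] (conjs ps)" for ps
  define \<Theta> where "\<Theta> = {(vsubst ?\<pi> (\<psi> ps), v \<circ> ?\<pi>) | ps. set ps \<subseteq> \<Phi>}"
  have key: "((v \<circ> ?\<pi>)(0 := b)) \<circ> ?\<pi> = v(m := b)" for b
    by (rule ext) (simp add: swp_def)
  have sat\<Theta>: "sat S UNIV (vsubst ?\<pi> (\<psi> ps)) ((v \<circ> ?\<pi>)(0 := b)) = sat S UNIV (\<psi> ps) (v(m := b))" for ps b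
    by (simp only: sat_vsubst key)
  have sat\<psi>: "sat S UNIV (\<psi> ps) u \<longleftrightarrow> (\<exists>w. \<forall>\<phi>\<in>set ps. sat S UNIV \<phi> (ov m w u))" for ps u
  proof -
    have e: "(\<lambda>n. if n \<in> set [0..<m] then w n else u n) = ov m w u" for w
      by (rule ext) (simp add: ov_def)
    show ?thesis by (simp only: \<psi>_def sat_Exs e sat_conjs)
  qed
  have sm: "small K A" by (rule csmall[OF Suc.prems(1)])
  have \<Theta>sub: "\<Theta> \<subseteq> {(\<phi>, v). wf S \<phi> \<and> (\<forall>n\<in>fv \<phi> - {0}. v n \<in> A)}"
  proof
    fix x assume "x \<in> \<Theta>"
    then obtain ps where x: "x = (vsubst ?\<pi> (\<psi> ps), v \<circ> ?\<pi>)" "set ps \<subseteq> \<Phi>" unfolding \<Theta>_def by auto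
    have wf: "wf S (vsubst ?\<pi> (\<psi> ps))" using x(2) Suc.prems(3)
      by (auto simp: wf_vsubst \<psi>_def wf_Exs wf_conjs)
    have hA: "(v \<circ> ?\<pi>) n \<in> A" if nin: "n \<in> fv (vsubst ?\<pi> (\<psi> ps)) - {0}" for n
    proof -
      obtain z where z: "z \<in> fv (\<psi> ps)" "n = ?\<pi> z" using nin fv_vsubst[of ?\<pi> "\<psi> ps"] by blast
      have "z \<ge> m" using z(1) by (auto simp: \<psi>_def fv_Exs)
      then have "z > m \<or> z = m" by auto
      then show ?thesis
      proof
        assume "z = m" then show ?thesis using z(2) nin by (auto simp: swp_def)
      next
        assume zm: "z > m"
        then have "n = z" using z(2) by (auto simp: swp_def)
        then show ?thesis using zm Suc.prems(2) by (auto simp: swp_def)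
      qed
    qed
    have "\<forall>n\<in>fv (vsubst ?\<pi> (\<psi> ps)) - {0}. (v \<circ> ?\<pi>) n \<in> A" by (intro ballI hA)
    then show "x \<in> {(\<phi>, v). wf S \<phi> \<and> (\<forall>n\<in>fv \<phi> - {0}. v n \<in> A)}" unfolding x(1) mem_Collect_eq case_prod_conv using wf by (intro conjI)
  qed
  have finsat: "\<exists>b. \<forall>(\<phi>, u)\<in>\<Theta>0. sat S UNIV \<phi> (u(0 := b))" if "\<Theta>0 \<subseteq> \<Theta>" "finite \<Theta>0" for \<Theta>0
  proof -
    have "\<forall>x\<in>\<Theta>0. \<exists>ps. x = (vsubst ?\<pi> (\<psi> ps), v \<circ> ?\<pi>) \<and> set ps \<subseteq> \<Phi>"
      using that(1) unfolding \<Theta>_def by auto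
    from collect_lists[OF that(2) this] obtain all where all: "set all \<subseteq> \<Phi>"
      "\<forall>x\<in>\<Theta>0. \<exists>ps. x = (vsubst ?\<pi> (\<psi> ps), v \<circ> ?\<pi>) \<and> set ps \<subseteq> set all" by blast
    obtain w where w: "\<forall>\<phi>\<in>set all. sat S UNIV \<phi> (ov (Suc m) w v)" using Suc.prems(4) all(1) by blast
    have e: "ov (Suc m) w v = ov m w (v(m := w m))" by (auto simp: ov_def)
    have "\<forall>(\<phi>, u)\<in>\<Theta>0. sat S UNIV \<phi> (u(0 := w m))"
    proof
      fix x assume "x \<in> \<Theta>0"
      then obtain ps where ps: "x = (vsubst ?\<pi> (\<psi> ps), v \<circ> ?\<pi>)" "set ps \<subseteq> set all" using all(2) by blast
      have "sat S UNIV (\<psi> ps) (v(m := w m))" unfolding sat\<psi> using w ps(2) e by auto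
      then show "case x of (\<phi>, u) \<Rightarrow> sat S UNIV \<phi> (u(0 := w m))" using ps(1) sat\<Theta> by simp
    qed
    then show ?thesis by blast
  qed
  obtain b where b: "\<forall>(\<phi>, u)\<in>\<Theta>. sat S UNIV \<phi> (u(0 := b))"
    using satu[unfolded saturated_def, rule_format, OF sm \<Theta>sub finsat] by blast
  have IH: "\<exists>w. \<forall>\<phi>\<in>\<Phi>. sat S UNIV \<phi> (ov m w (v(m := b)))"
  proof (rule Suc.IH[of "insert b A"])
    show "countable (insert b A)" using Suc.prems(1) by simp
    show "\<forall>n\<ge>m. (v(m := b)) n \<in> insert b A" using Suc.prems(2) by auto
    show "\<forall>\<phi>\<in>\<Phi>. wf S \<phi>" by (rule Suc.prems(3))
    show "\<forall>ps. set ps \<subseteq> \<Phi> \<longrightarrow> (\<exists>w. \<forall>\<phi>\<in>set ps. sat S UNIV \<phi> (ov m w (v(m := b))))"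
    proof (intro allI impI)
      fix ps assume "set ps \<subseteq> \<Phi>"
      then have "(vsubst ?\<pi> (\<psi> ps), v \<circ> ?\<pi>) \<in> \<Theta>" unfolding \<Theta>_def by blast
      then have "sat S UNIV (\<psi> ps) (v(m := b))" using b sat\<Theta> by auto
      then show "\<exists>w. \<forall>\<phi>\<in>set ps. sat S UNIV \<phi> (ov m w (v(m := b)))" unfolding sat\<psi> .
    qed
  qed
  then obtain w where w: "\<forall>\<phi>\<in>\<Phi>. sat S UNIV \<phi> (ov m w (v(m := b)))" by blast
  have "ov m w (v(m := b)) = ov (Suc m) (w(m := b)) v" by (auto simp: ov_def)
  then show ?case using w by metis
qed




lemma closure_exists:
  fixes F :: "'a list \<Rightarrow> 'a set"
  assumes cF: "\<And>xs. countable (F xs)" and cA: "countable A"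
  shows "\<exists>M. A \<subseteq> M \<and> countable M \<and> (\<forall>xs. set xs \<subseteq> M \<longrightarrow> F xs \<subseteq> M)"
proof -
  define Mn where "Mn = rec_nat A (\<lambda>_ B. B \<union> \<Union> (F ` lists B))"
  have Mn0: "Mn 0 = A" and MnS: "Mn (Suc n) = Mn n \<union> \<Union> (F ` lists (Mn n))" for n
    unfolding Mn_def by simp_all
  have cMn: "countable (Mn n)" for n
    by (induction n) (use cA cF in \<open>simp_all add: Mn0 MnS\<close>)
  have mono: "Mn n \<subseteq> Mn m" if "n \<le> m" for n m
    using that by (induction m) (auto simp: MnS le_Suc_eq)
  define M where "M = (\<Union>n. Mn n)"
  have fin: "\<exists>n. set xs \<subseteq> Mn n" if "set xs \<subseteq> M" for xs
    using that
  proof (induction xs)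
    case Nil then show ?case by simp
  next
    case (Cons x xs)
    then obtain n where n: "set xs \<subseteq> Mn n" by auto
    obtain k where k: "x \<in> Mn k" using Cons.prems unfolding M_def by auto
    have "set (x # xs) \<subseteq> Mn (max n k)" using n k mono[of n "max n k"] mono[of k "max n k"] by auto
    then show ?case by blast
  qed
  have "F xs \<subseteq> M" if xsM: "set xs \<subseteq> M" for xs
  proof -
    obtain n where "set xs \<subseteq> Mn n" using fin[OF xsM] by blast
    then have "F xs \<subseteq> Mn (Suc n)" by (auto simp: MnS)
    then show ?thesis unfolding M_def by blast
  qed
  moreover have "A \<subseteq> M" unfolding M_def using Mn0 by blast
  moreover have "countable M" unfolding M_def using cMn by auto
  ultimately show ?thesis by blast
qed

definition asg :: "'a list \<Rightarrow> nat \<Rightarrow> 'a" where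
  "asg xs = (\<lambda>i. if i < length xs then xs ! i else hd xs)"

definition tv :: "('f, 'r, 'a, 'z) mstruct_scheme \<Rightarrow> 'a list \<Rightarrow> 'a set" where
  "tv S xs = (\<lambda>(p, n). SOME x. sat S UNIV p ((asg xs)(n := x))) ` {(p, n). \<exists>x. sat S UNIV p ((asg xs)(n := x))}
     \<union> (\<lambda>f. Fi S f xs) ` {f. length xs = arf S f}"

lemma countable_tv:
  fixes S :: "('f, 'r, 'a, 'z) mstruct_scheme"
  assumes "countable (UNIV :: 'f set)" "countable (UNIV :: 'r set)"
  shows "countable (tv S xs)"
proof -
  have "countable (UNIV :: (('f, 'r) fm \<times> nat) set)"
    using countable_fm[OF assms] by (simp add: countable_SIGMA[of UNIV "\<lambda>_. UNIV", simplified])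
  then have "countable {(p :: ('f, 'r) fm, n :: nat). \<exists>x. sat S UNIV p ((asg xs)(n := x))}"
    by (rule countable_subset[rotated]) auto
  moreover have "countable {f :: 'f. length xs = arf S f}"
    using assms(1) by (rule countable_subset[rotated]) auto
  ultimately show ?thesis unfolding tv_def by auto
qed

lemma tv_elem_sub:
  fixes S :: "('f, 'r, 'a, 'z) mstruct_scheme"
  assumes ne: "M \<noteq> {}" and cl: "\<forall>xs. set xs \<subseteq> M \<longrightarrow> tv S xs \<subseteq> M"
  shows "elem_sub S M"
proof -
  have func: "Fi S f xs \<in> M" if "length xs = arf S f" "set xs \<subseteq> M" for f xs
    using cl that unfolding tv_def by blast
  have "sat S M \<phi> v = sat S UNIV \<phi> v" if "\<forall>n. v n \<in> M" for \<phi> v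
    using that
  proof (induction \<phi> arbitrary: v)
    case (Ex n p)
    show ?case
    proof
      assume "sat S M (Ex n p) v"
      then obtain x where "x \<in> M" "sat S M p (v(n := x))" by auto
      moreover have "\<forall>m. (v(n := x)) m \<in> M" using Ex.prems \<open>x \<in> M\<close> by auto
      ultimately have "sat S UNIV p (v(n := x))" using Ex.IH by blast
      then show "sat S UNIV (Ex n p) v" by auto
    next
      assume "sat S UNIV (Ex n p) v"
      then obtain x where x: "sat S UNIV p (v(n := x))" by auto
      define N where "N = Suc (Max (insert n (fv p)))"
      have fvN: "\<forall>z\<in>insert n (fv p). z < N" unfolding N_def using finite_fv[of p]
        by (meson Max_ge finite_insert le_imp_less_Suc)
      define xs where "xs = map v [0..<N]"
      have xsM: "set xs \<subseteq> M" unfolding xs_def using Ex.prems by auto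
      have agree: "\<forall>z\<in>fv p. ((asg xs)(n := y)) z = (v(n := y)) z" for y
        using fvN unfolding xs_def asg_def by auto
      have "sat S UNIV p ((asg xs)(n := x))" using sat_cong[OF agree[of x], of S UNIV] x by (rule iffD2)
      then have "sat S UNIV p ((asg xs)(n := (SOME x. sat S UNIV p ((asg xs)(n := x)))))"
        by (rule someI)
      moreover have "(SOME x. sat S UNIV p ((asg xs)(n := x))) \<in> tv S xs"
        unfolding tv_def using \<open>sat S UNIV p ((asg xs)(n := x))\<close>
        by (intro UnI1 image_eqI[where x="(p, n)"]) auto
      ultimately obtain y where y: "y \<in> M" "sat S UNIV p ((asg xs)(n := y))"
        using cl xsM by blast
      have "sat S UNIV p (v(n := y))" using sat_cong[OF agree[of y], of S UNIV] y(2) by (rule iffD1)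
      moreover have "\<forall>m. (v(n := y)) m \<in> M" using Ex.prems y(1) by auto
      ultimately have "sat S M p (v(n := y))" using Ex.IH by blast
      then show "sat S M (Ex n p) v" using y(1) by auto
    qed
  qed auto
  then show ?thesis unfolding elem_sub_def using ne func by blast
qed

lemma LS_closure:
  fixes S :: "('f, 'r, 'a, 'z) mstruct_scheme" and G :: "'a list \<Rightarrow> 'a set"
  assumes "countable (UNIV :: 'f set)" "countable (UNIV :: 'r set)"
    and cG: "\<And>xs. countable (G xs)" and cA: "countable A"
  shows "\<exists>M. A \<subseteq> M \<and> countable M \<and> elem_sub S M \<and> (\<forall>xs. set xs \<subseteq> M \<longrightarrow> G xs \<subseteq> M)"
proof -
  have "\<exists>M. insert undefined A \<subseteq> M \<and> countable M \<and> (\<forall>xs. set xs \<subseteq> M \<longrightarrow> tv S xs \<union> G xs \<subseteq> M)"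
    by (rule closure_exists) (use countable_tv[OF assms(1,2)] cG cA in auto)
  then obtain M where M: "insert undefined A \<subseteq> M" "countable M" "\<forall>xs. set xs \<subseteq> M \<longrightarrow> tv S xs \<union> G xs \<subseteq> M"
    by blast
  have "elem_sub S M" by (rule tv_elem_sub) (use M in auto)
  then show ?thesis using M by blast
qed




definition sw :: "nat \<Rightarrow> nat \<Rightarrow> nat" where
  "sw k n = (if n < k then n + k else if n < 2 * k then n - k else n)"

lemma sw_app:
  assumes "length a = k" "length b = k" "n < 2 * k"
  shows "(a @ b) ! (sw k n) = (b @ a) ! n"
  using assms by (auto simp: sw_def nth_append)

lemma sat_swap:
  assumes "length a = k" "length b = k" "fv \<theta> \<subseteq> {..<2 * k}"
  shows "sat S UNIV (vsubst (sw k) \<theta>) (\<lambda>n. (a @ b) ! n) = sat S UNIV \<theta> (\<lambda>n. (b @ a) ! n)"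
  unfolding sat_vsubst
proof (rule sat_cong, intro ballI)
  fix n assume "n \<in> fv \<theta>"
  then have "n < 2 * k" using assms(3) by auto
  then show "((\<lambda>n. (a @ b) ! n) \<circ> sw k) n = (b @ a) ! n" using sw_app[OF assms(1,2)] by simp
qed

lemma fv_sw: "fv \<theta> \<subseteq> {..<2 * k} \<Longrightarrow> fv (vsubst (sw k) \<theta>) \<subseteq> {..<2 * k}"
  using fv_vsubst[of "sw k" \<theta>] by (auto simp: sw_def)

lemma indisc_pair:
  assumes I: "indisc S k I" and "p < q" "i < j" "wf S \<theta>" "fv \<theta> \<subseteq> {..<2 * k}"
  shows "sat S UNIV \<theta> (\<lambda>n. (I p @ I q) ! n) = sat S UNIV \<theta> (\<lambda>n. (I i @ I j) ! n)"
proof -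
  have e: "k * length [p, q] = 2 * k" by simp
  have "fv \<theta> \<subseteq> {..<k * length [p, q]}" unfolding e by (rule assms(5))
  moreover have H: "\<forall>\<phi> is js. wf S \<phi> \<longrightarrow> sorted_wrt (<) is \<longrightarrow> sorted_wrt (<) js \<longrightarrow>
        length is = length js \<longrightarrow> fv \<phi> \<subseteq> {..< k * length is} \<longrightarrow>
        (sat S UNIV \<phi> (\<lambda>n. concat (map I is) ! n) \<longleftrightarrow> sat S UNIV \<phi> (\<lambda>n. concat (map I js) ! n))"
    using I unfolding indisc_def by (rule conjunct2)
  ultimately have "sat S UNIV \<theta> (\<lambda>n. concat (map I [p, q]) ! n) = sat S UNIV \<theta> (\<lambda>n. concat (map I [i, j]) ! n)"
    using H[rule_format, of \<theta> "[p, q]" "[i, j]"] assms(2,3,4) by simp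
  then show ?thesis by simp
qed

lemma ledge_autf:
  fixes S :: "('f, 'r, 'a, 'z) mstruct_scheme" and K :: "'k set"
  assumes cf: "countable (UNIV :: 'f set)" and cr: "countable (UNIV :: 'r set)"
    and mon: "monster S K" and I: "indisc S k I" and cd: "I i \<noteq> I j"
  shows "\<exists>\<sigma>\<in>Autf S K. map \<sigma> (I i) = I j"
proof -
  define c where "c = I i"
  define d where "d = I j"
  have lenI: "length (I t) = k" for t using I unfolding indisc_def by simp
  have lc: "length c = k" and ld: "length d = k" unfolding c_def d_def by (simp_all add: lenI)
  have ij: "i \<noteq> j" using cd by auto
  have csmall: "\<And>X::'a set. countable X \<Longrightarrow> small K X"
    using mon unfolding monster_def by (auto intro: small_countable)
  have satu: "saturated S K" and homog: "homogeneous S K" using mon unfolding monster_def by auto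
  obtain N0 where N0: "countable N0" "elem_sub S N0"
    using LS_closure[OF cf cr, of "\<lambda>_. {}" "{}"] by auto
  have N0ne: "N0 \<noteq> {}" using N0(2) unfolding elem_sub_def by simp
  define v where "v n = from_nat_into N0 (n - 2 * k)" for n
  have vN0: "v n \<in> N0" for n unfolding v_def using N0ne by (rule from_nat_into)
  have vsurj: "\<exists>p\<ge>2 * k. v p = a" if aN0: "a \<in> N0" for a
  proof -
    obtain m where "from_nat_into N0 m = a" using from_nat_into_surj[OF N0(1) aN0] by blast
    then show ?thesis by (intro exI[of _ "m + 2 * k"]) (simp add: v_def)
  qed
  define T where "T = c @ d"
  define \<Sigma>1 where "\<Sigma>1 = {\<theta>. wf S \<theta> \<and> fv \<theta> \<subseteq> {..<2 * k} \<and> sat S UNIV \<theta> (\<lambda>n. T ! n)}"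
  define \<Sigma>2 where "\<Sigma>2 = {Iff \<psi> (vsubst (sw k) \<psi>) | \<psi>. wf S \<psi> \<and> fv \<psi> \<inter> {k..<2 * k} = {}}"
  have co1: "sat S UNIV \<psi> (ov (2 * k) (\<lambda>n. (x @ y) ! n) v) = sat S UNIV \<psi> (ov k (\<lambda>n. x ! n) v)"
    if "length x = k" "fv \<psi> \<inter> {k..<2 * k} = {}" for \<psi> x y
    by (rule sat_cong) (use that in \<open>auto simp: ov_def nth_append\<close>)
  have co2: "sat S UNIV \<psi> (ov (2 * k) (\<lambda>n. (x @ y) ! n) v \<circ> sw k) = sat S UNIV \<psi> (ov k (\<lambda>n. y ! n) v)"
    if "length x = k" "length y = k" "fv \<psi> \<inter> {k..<2 * k} = {}" for \<psi> x y
    by (rule sat_cong) (use that in \<open>auto simp: ov_def nth_append sw_def\<close>)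
  have co3: "sat S UNIV \<theta> (ov (2 * k) w v) = sat S UNIV \<theta> (\<lambda>n. w n)"
    if "fv \<theta> \<subseteq> {..<2 * k}" for \<theta> w
    by (rule sat_cong) (use that in \<open>auto simp: ov_def\<close>)
  have finsat: "\<exists>w. \<forall>\<phi>\<in>set ps. sat S UNIV \<phi> (ov (2 * k) w v)" if ps: "set ps \<subseteq> \<Sigma>1 \<union> \<Sigma>2" for ps
  proof -
    define \<Psi> where "\<Psi> = {\<psi>. wf S \<psi> \<and> fv \<psi> \<inter> {k..<2 * k} = {} \<and> Iff \<psi> (vsubst (sw k) \<psi>) \<in> set ps}"
    have "inj_on (\<lambda>\<psi>. Iff \<psi> (vsubst (sw k) \<psi>)) \<Psi>" unfolding inj_on_def Iff_def by auto
    moreover have "(\<lambda>\<psi>. Iff \<psi> (vsubst (sw k) \<psi>)) ` \<Psi> \<subseteq> set ps" unfolding \<Psi>_def by auto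
    ultimately have fin\<Psi>: "finite \<Psi>" using finite_imageD finite_subset by (metis List.finite_set)
    define col where "col p = {\<psi> \<in> \<Psi>. sat S UNIV \<psi> (ov k (\<lambda>n. I p ! n) v)}" for p
    have "range col \<subseteq> Pow \<Psi>" unfolding col_def by auto
    then have "finite (range col)" using fin\<Psi> by (simp add: finite_subset)
    then have "\<not> inj col" using finite_imageD infinite_UNIV_nat by blast
    then obtain p0 q0 where pq0: "p0 \<noteq> q0" "col p0 = col q0" unfolding inj_def by blast
    define p where "p = min p0 q0"
    define q where "q = max p0 q0"
    have pq: "p < q" "col p = col q" using pq0 unfolding p_def q_def by (auto simp: min_def max_def)
    define x where "x = (if i < j then I p else I q)"
    define y where "y = (if i < j then I q else I p)"
    have lx: "length x = k" and ly: "length y = k" unfolding x_def y_def by (simp_all add: lenI)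
    have colxy: "col (if i < j then p else q) = col (if i < j then q else p)" using pq by auto
    have xI: "x = I (if i < j then p else q)" and yI: "y = I (if i < j then q else p)"
      unfolding x_def y_def by auto
    define w where "w n = (x @ y) ! n" for n
    have "sat S UNIV \<phi> (ov (2 * k) w v)" if "\<phi> \<in> set ps" for \<phi>
    proof -
      have "\<phi> \<in> \<Sigma>1 \<or> \<phi> \<in> \<Sigma>2" using ps that by auto
      then show ?thesis
      proof
        assume "\<phi> \<in> \<Sigma>1"
        then have \<phi>: "wf S \<phi>" "fv \<phi> \<subseteq> {..<2 * k}" "sat S UNIV \<phi> (\<lambda>n. T ! n)" unfolding \<Sigma>1_def by auto
        have "sat S UNIV \<phi> (\<lambda>n. (x @ y) ! n)"
        proof (cases "i < j")
          case True
          then have "sat S UNIV \<phi> (\<lambda>n. (x @ y) ! n) = sat S UNIV \<phi> (\<lambda>n. (I i @ I j) ! n)"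
            unfolding x_def y_def using indisc_pair[OF I pq(1) True \<phi>(1,2)] by simp
          then show ?thesis using \<phi>(3) unfolding T_def c_def d_def by simp
        next
          case False
          then have ji: "j < i" using ij by auto
          have wfs: "wf S (vsubst (sw k) \<phi>)" using \<phi>(1) by (simp add: wf_vsubst)
          have "sat S UNIV \<phi> (\<lambda>n. (x @ y) ! n) = sat S UNIV (vsubst (sw k) \<phi>) (\<lambda>n. (I p @ I q) ! n)"
            unfolding x_def y_def using False sat_swap[OF lenI[of p] lenI[of q] \<phi>(2), of S] by simp
          also have "\<dots> = sat S UNIV (vsubst (sw k) \<phi>) (\<lambda>n. (I j @ I i) ! n)"
            by (rule indisc_pair[OF I pq(1) ji wfs fv_sw[OF \<phi>(2)]])
          also have "\<dots> = sat S UNIV \<phi> (\<lambda>n. (I i @ I j) ! n)"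
            using sat_swap[OF lenI[of j] lenI[of i] \<phi>(2), of S] by simp
          finally show ?thesis using \<phi>(3) unfolding T_def c_def d_def by simp
        qed
        then show ?thesis using co3[OF \<phi>(2)] unfolding w_def by simp
      next
        assume "\<phi> \<in> \<Sigma>2"
        then obtain \<psi> where \<psi>: "\<phi> = Iff \<psi> (vsubst (sw k) \<psi>)" "wf S \<psi>" "fv \<psi> \<inter> {k..<2 * k} = {}"
          unfolding \<Sigma>2_def by auto
        have \<psi>\<Psi>: "\<psi> \<in> \<Psi>" unfolding \<Psi>_def using \<psi> that by auto
        have "sat S UNIV \<psi> (ov (2 * k) w v) = sat S UNIV \<psi> (ov k (\<lambda>n. x ! n) v)"
          unfolding w_def by (rule co1[OF lx \<psi>(3)])
        also have "\<dots> = sat S UNIV \<psi> (ov k (\<lambda>n. y ! n) v)"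
          using colxy \<psi>\<Psi> unfolding col_def xI yI by blast
        also have "\<dots> = sat S UNIV \<psi> (ov (2 * k) w v \<circ> sw k)"
          unfolding w_def by (rule co2[OF lx ly \<psi>(3), symmetric])
        finally show ?thesis unfolding \<psi>(1) by (simp add: sat_vsubst)
      qed
    qed
    then show ?thesis by blast
  qed
  obtain w where w: "\<forall>\<phi>\<in>\<Sigma>1 \<union> \<Sigma>2. sat S UNIV \<phi> (ov (2 * k) w v)"
  proof -
    have "\<exists>w. \<forall>\<phi>\<in>\<Sigma>1 \<union> \<Sigma>2. sat S UNIV \<phi> (ov (2 * k) w v)"
    proof (rule realize[OF satu csmall N0(1)])
      show "\<forall>n\<ge>2 * k. v n \<in> N0" using vN0 by blast
      show "\<forall>\<phi>\<in>\<Sigma>1 \<union> \<Sigma>2. wf S \<phi>" unfolding \<Sigma>1_def \<Sigma>2_def by (auto simp: wf_vsubst)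
      show "\<forall>ps. set ps \<subseteq> \<Sigma>1 \<union> \<Sigma>2 \<longrightarrow> (\<exists>w. \<forall>\<phi>\<in>set ps. sat S UNIV \<phi> (ov (2 * k) w v))"
        using finsat by blast
    qed
    then show ?thesis using that by blast
  qed
  define U where "U = ov (2 * k) w v"
  have P1: "sat S UNIV \<theta> U = sat S UNIV \<theta> (\<lambda>n. T ! n)" if "wf S \<theta>" "fv \<theta> \<subseteq> {..<2 * k}" for \<theta>
  proof
    assume a: "sat S UNIV \<theta> U"
    show "sat S UNIV \<theta> (\<lambda>n. T ! n)"
    proof (rule ccontr)
      assume "\<not> sat S UNIV \<theta> (\<lambda>n. T ! n)"
      then have "Neg \<theta> \<in> \<Sigma>1" unfolding \<Sigma>1_def using that by auto
      then have "sat S UNIV (Neg \<theta>) U" using w unfolding U_def by blast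
      then show False using a by simp
    qed
  next
    assume "sat S UNIV \<theta> (\<lambda>n. T ! n)"
    then have "\<theta> \<in> \<Sigma>1" unfolding \<Sigma>1_def using that by auto
    then show "sat S UNIV \<theta> U" using w unfolding U_def by auto
  qed
  have P2: "sat S UNIV \<psi> U = sat S UNIV \<psi> (U \<circ> sw k)" if "wf S \<psi>" "fv \<psi> \<inter> {k..<2 * k} = {}" for \<psi>
  proof -
    have "Iff \<psi> (vsubst (sw k) \<psi>) \<in> \<Sigma>2" unfolding \<Sigma>2_def using that by auto
    then have "sat S UNIV (Iff \<psi> (vsubst (sw k) \<psi>)) U" using w unfolding U_def by blast
    then show ?thesis by (simp add: sat_vsubst)
  qed
  define B where "B = U ` {..<2 * k}"
  define g where "g x = T ! (LEAST t. t < 2 * k \<and> U t = x)" for x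
  have LeastU: "(LEAST t. t < 2 * k \<and> U t = x) < 2 * k \<and> U (LEAST t. t < 2 * k \<and> U t = x) = x"
    if xB: "x \<in> B" for x
  proof -
    obtain t where "t < 2 * k" "U t = x" using xB unfolding B_def by blast
    then have ex: "\<exists>t. t < 2 * k \<and> U t = x" by blast
    show ?thesis by (rule LeastI_ex[OF ex])
  qed
  have elem1: "sat S UNIV \<phi> u = sat S UNIV \<phi> (g \<circ> u)"
    if "wf S \<phi>" "\<forall>n\<in>fv \<phi>. u n \<in> B" for \<phi> u
  proof -
    define \<rho> where "\<rho> n = (LEAST t. t < 2 * k \<and> U t = u n)" for n
    have \<rho>: "\<rho> n < 2 * k" "U (\<rho> n) = u n" if "n \<in> fv \<phi>" for n
      using LeastU that \<open>\<forall>n\<in>fv \<phi>. u n \<in> B\<close> unfolding \<rho>_def by auto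
    have fvr: "fv (vsubst \<rho> \<phi>) \<subseteq> {..<2 * k}" using fv_vsubst[of \<rho> \<phi>] \<rho>(1) by auto
    have wfr: "wf S (vsubst \<rho> \<phi>)" using that(1) by (simp add: wf_vsubst)
    have "sat S UNIV \<phi> u = sat S UNIV \<phi> (U \<circ> \<rho>)" by (rule sat_cong) (use \<rho>(2) in auto)
    also have "\<dots> = sat S UNIV (vsubst \<rho> \<phi>) U" by (simp add: sat_vsubst)
    also have "\<dots> = sat S UNIV (vsubst \<rho> \<phi>) (\<lambda>n. T ! n)" by (rule P1[OF wfr fvr])
    also have "\<dots> = sat S UNIV \<phi> ((\<lambda>n. T ! n) \<circ> \<rho>)" by (simp add: sat_vsubst)
    also have "\<dots> = sat S UNIV \<phi> (g \<circ> u)" by (rule sat_cong) (simp add: g_def \<rho>_def)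
    finally show ?thesis .
  qed
  have cB: "countable B" unfolding B_def by simp
  have E1: "\<forall>\<phi> u. wf S \<phi> \<longrightarrow> (\<forall>n\<in>fv \<phi>. u n \<in> B) \<longrightarrow> (sat S UNIV \<phi> u \<longleftrightarrow> sat S UNIV \<phi> (g \<circ> u))"
    using elem1 by blast
  obtain h where h: "is_aut S h" "\<forall>x\<in>B. h x = g x"
    using mp[OF mp[OF homog[unfolded homogeneous_def, THEN spec[of _ B], THEN spec[of _ g]] csmall[OF cB]] E1] by blast
  have hT: "h (U t) = T ! t" if "t < 2 * k" for t
  proof -
    have UB: "U t \<in> B" unfolding B_def using that by auto
    define t' where "t' = (LEAST s. s < 2 * k \<and> U s = U t)"
    have t': "t' < 2 * k" "U t' = U t" using LeastU[OF UB] unfolding t'_def by auto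
    have "sat S UNIV (Eq (Var t) (Var t')) U" using t' by simp
    then have "sat S UNIV (Eq (Var t) (Var t')) (\<lambda>n. T ! n)" using P1[of "Eq (Var t) (Var t')"] that t' by auto
    then have "T ! t = T ! t'" by simp
    then show ?thesis using h(2) UB unfolding g_def t'_def by simp
  qed
  have hc: "h (U t) = c ! t" if "t < k" for t using hT[of t] that lc unfolding T_def by (simp add: nth_append)
  have hd: "h (U (t + k)) = d ! t" if "t < k" for t using hT[of "t + k"] that lc unfolding T_def by (simp add: nth_append)
  define h' where "h' = inv h"
  have hbij: "bij h" using h(1) unfolding is_aut_def by simp
  have h'h: "h' (h x) = x" for x unfolding h'_def using hbij by (simp add: bij_is_inj)
  have hh': "h (h' x) = x" for x unfolding h'_def using hbij by (simp add: bij_is_surj surj_f_inv_f)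
  have h'aut: "is_aut S h'" unfolding h'_def by (rule is_aut_inv[OF h(1)])
  define N where "N = h ` N0"
  have h'N: "h' x \<in> N0" if "x \<in> N" for x using that h'h unfolding N_def by auto
  have U_c: "U t = h' (c ! t)" if "t < k" for t using hc[OF that] h'h by metis
  have U_d: "U (t + k) = h' (d ! t)" if "t < k" for t using hd[OF that] h'h by metis
  define g2 where "g2 x = (if x \<in> N then x else d ! (LEAST t. t < k \<and> c ! t = x))" for x
  define B2 where "B2 = N \<union> set c"
  have elem2: "sat S UNIV \<phi> u = sat S UNIV \<phi> (g2 \<circ> u)"
    if "wf S \<phi>" "\<forall>n\<in>fv \<phi>. u n \<in> B2" for \<phi> u
  proof -
    define \<rho> where "\<rho> n = (if u n \<in> N then (SOME p. p \<ge> 2 * k \<and> v p = h' (u n))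
       else (LEAST t. t < k \<and> c ! t = u n))" for n
    have \<rho>: "U (\<rho> n) = h' (u n) \<and> (U \<circ> sw k) (\<rho> n) = h' (g2 (u n)) \<and> \<rho> n \<notin> {k..<2 * k}"
      if "n \<in> fv \<phi>" for n
    proof (cases "u n \<in> N")
      case True
      have ex: "\<exists>p. p \<ge> 2 * k \<and> v p = h' (u n)" using vsurj h'N[OF True] by blast
      have r: "\<rho> n = (SOME p. p \<ge> 2 * k \<and> v p = h' (u n))" using True by (simp add: \<rho>_def)
      have p: "\<rho> n \<ge> 2 * k" "v (\<rho> n) = h' (u n)" unfolding r using someI_ex[OF ex] by simp_all
      then show ?thesis using True unfolding g2_def by (auto simp: U_def ov_def sw_def)
    next
      case False
      then have "u n \<in> set c" using that \<open>\<forall>n\<in>fv \<phi>. u n \<in> B2\<close> unfolding B2_def by auto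
      then have ex: "\<exists>t. t < k \<and> c ! t = u n" using lc by (auto simp: in_set_conv_nth)
      define t0 where "t0 = (LEAST t. t < k \<and> c ! t = u n)"
      have t0: "t0 < k" "c ! t0 = u n" using LeastI_ex[OF ex] unfolding t0_def by auto
      have r: "\<rho> n = t0" unfolding \<rho>_def t0_def using False by simp
      have "U t0 = h' (u n)" using U_c[OF t0(1)] t0(2) by simp
      moreover have "(U \<circ> sw k) t0 = h' (g2 (u n))"
        using U_d[OF t0(1)] False t0(1) unfolding g2_def t0_def[symmetric] by (simp add: sw_def add.commute)
      ultimately show ?thesis using r t0(1) by auto
    qed
    have fvr: "fv (vsubst \<rho> \<phi>) \<inter> {k..<2 * k} = {}" using fv_vsubst[of \<rho> \<phi>] \<rho> by blast
    have wfr: "wf S (vsubst \<rho> \<phi>)" using that(1) by (simp add: wf_vsubst)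
    have "sat S UNIV \<phi> u = sat S UNIV \<phi> (\<lambda>n. h' (u n))" using sat_aut_UNIV[OF h'aut that(1)] by simp
    also have "\<dots> = sat S UNIV \<phi> (U \<circ> \<rho>)" by (rule sat_cong) (use \<rho> in auto)
    also have "\<dots> = sat S UNIV (vsubst \<rho> \<phi>) U" by (simp add: sat_vsubst)
    also have "\<dots> = sat S UNIV (vsubst \<rho> \<phi>) (U \<circ> sw k)" by (rule P2[OF wfr fvr])
    also have "\<dots> = sat S UNIV \<phi> ((U \<circ> sw k) \<circ> \<rho>)" by (simp add: sat_vsubst)
    also have "\<dots> = sat S UNIV \<phi> (\<lambda>n. h' (g2 (u n)))" by (rule sat_cong) (use \<rho> in auto)
    also have "\<dots> = sat S UNIV \<phi> (g2 \<circ> u)" using sat_aut_UNIV[OF h'aut that(1), of "g2 \<circ> u"] by (simp add: comp_def)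
    finally show ?thesis .
  qed
  have cB2: "countable B2" unfolding B2_def N_def using N0(1) by (simp add: countable_finite)
  have E2: "\<forall>\<phi> u. wf S \<phi> \<longrightarrow> (\<forall>n\<in>fv \<phi>. u n \<in> B2) \<longrightarrow> (sat S UNIV \<phi> u \<longleftrightarrow> sat S UNIV \<phi> (g2 \<circ> u))"
    using elem2 by blast
  obtain \<sigma> where \<sigma>: "is_aut S \<sigma>" "\<forall>x\<in>B2. \<sigma> x = g2 x"
    using mp[OF mp[OF homog[unfolded homogeneous_def, THEN spec[of _ B2], THEN spec[of _ g2]] csmall[OF cB2]] E2] by blast
  have fixN: "\<forall>x\<in>N. \<sigma> x = x" using \<sigma>(2) unfolding B2_def g2_def by auto
  have "map \<sigma> c = d"
  proof (rule nth_equalityI)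
    show "length (map \<sigma> c) = length d" using lc ld by simp
    fix t assume "t < length (map \<sigma> c)"
    then have t: "t < k" using lc by simp
    have sc: "\<sigma> (c ! t) = g2 (c ! t)" using \<sigma>(2) t lc unfolding B2_def by auto
    have "g2 (c ! t) = d ! t"
    proof (cases "c ! t \<in> N")
      case True
      obtain p where p: "p \<ge> 2 * k" "v p = h' (c ! t)" using vsurj h'N[OF True] by blast
      have Up: "U p = U t" using p U_c[OF t] by (simp add: U_def ov_def)
      have "sat S UNIV (Eq (Var t) (Var p)) U" using Up by simp
      moreover have "fv (Eq (Var t) (Var p) :: ('f, 'r) fm) \<inter> {k..<2 * k} = {}" using t p by auto
      ultimately have "sat S UNIV (Eq (Var t) (Var p)) (U \<circ> sw k)" using P2[of "Eq (Var t) (Var p)"] by simp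
      then have "U (t + k) = U p" using t p by (simp add: sw_def)
      then have "h' (d ! t) = h' (c ! t)" using U_d[OF t] Up U_c[OF t] by simp
      then have "d ! t = c ! t" by (metis hh')
      then show ?thesis using True unfolding g2_def by simp
    next
      case False
      have ex: "\<exists>s. s < k \<and> c ! s = c ! t" using t by blast
      define t0 where "t0 = (LEAST s. s < k \<and> c ! s = c ! t)"
      have t0: "t0 < k" "c ! t0 = c ! t" using LeastI_ex[OF ex] unfolding t0_def by auto
      have "U t0 = U t" using U_c[OF t0(1)] U_c[OF t] t0(2) by simp
      then have "sat S UNIV (Eq (Var t0) (Var t)) U" by simp
      moreover have "fv (Eq (Var t0) (Var t) :: ('f, 'r) fm) \<inter> {k..<2 * k} = {}" using t t0 by auto
      ultimately have "sat S UNIV (Eq (Var t0) (Var t)) (U \<circ> sw k)" using P2[of "Eq (Var t0) (Var t)"] by simp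
      then have "U (t0 + k) = U (t + k)" using t t0 by (simp add: sw_def)
      then have "h' (d ! t0) = h' (d ! t)" using U_d[OF t] U_d[OF t0(1)] by simp
      then have "d ! t0 = d ! t" by (metis hh')
      then show ?thesis using False unfolding g2_def t0_def[symmetric] by simp
    qed
    then show "map \<sigma> c ! t = d ! t" using sc t lc by simp
  qed
  moreover have "\<sigma> \<in> Autf S K"
  proof (rule Autf.gen[OF \<sigma>(1)])
    show "elem_sub S N" unfolding N_def by (rule elem_sub_aut[OF h(1) N0(2)])
    show "small K N" unfolding N_def using N0(1) by (intro csmall) simp
    show "\<forall>x\<in>N. \<sigma> x = x" by (rule fixN)
  qed
  ultimately show ?thesis unfolding c_def d_def by blast
qed




lemma lpath_autf:
  fixes S :: "('f, 'r, 'a, 'z) mstruct_scheme" and K :: "'k set"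
  assumes cf: "countable (UNIV :: 'f set)" and cr: "countable (UNIV :: 'r set)"
    and mon: "monster S K"
  shows "lpath S k n c d \<Longrightarrow> \<exists>\<sigma>\<in>Autf S K. map \<sigma> c = d"
proof (induction n arbitrary: d)
  case 0
  then have "map id c = d" by simp
  then show ?case using Autf.ident by blast
next
  case (Suc n)
  from Suc.prems have "lpath S k n c d \<or> (\<exists>e. length e = k \<and> lpath S k n c e \<and> ledge S k e d)" by simp
  then show ?case
  proof
    assume "lpath S k n c d" then show ?thesis by (rule Suc.IH)
  next
    assume "\<exists>e. length e = k \<and> lpath S k n c e \<and> ledge S k e d"
    then obtain e where e: "lpath S k n c e" "ledge S k e d" by blast
    obtain \<sigma> where \<sigma>: "\<sigma> \<in> Autf S K" "map \<sigma> c = e" using Suc.IH[OF e(1)] by blast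
    obtain I i j where I: "indisc S k I" "I i = e" "I j = d" "e \<noteq> d" using e(2) unfolding ledge_def by blast
    obtain \<tau> where \<tau>: "\<tau> \<in> Autf S K" "map \<tau> (I i) = I j"
      using ledge_autf[OF cf cr mon I(1)] I by metis
    have "\<tau> \<circ> \<sigma> \<in> Autf S K" using \<tau>(1) \<sigma>(1) by (rule Autf.comp)
    moreover have "map (\<tau> \<circ> \<sigma>) c = d" using \<sigma>(2) \<tau>(2) I by (metis map_map)
    ultimately show ?thesis by blast
  qed
qed

definition sig :: "('f, 'r, 'a, 'z) mstruct_scheme \<Rightarrow> 'k set \<Rightarrow> 'a list \<Rightarrow> 'a list \<Rightarrow> 'a \<Rightarrow> 'a" where
  "sig S K a b = (SOME \<sigma>. \<sigma> \<in> Autf S K \<and> map \<sigma> a = b \<and>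
      (\<forall>\<tau>\<in>Autf S K. map \<tau> a = b \<longrightarrow> (\<forall>m. bounds S m \<tau> \<longrightarrow> bounds S m \<sigma>)))"

lemma bounds_mono: "bounds S m \<sigma> \<Longrightarrow> m \<le> m' \<Longrightarrow> bounds S m' \<sigma>"
  unfolding bounds_def using lpath_mono by blast

lemma sig_spec:
  assumes "\<exists>\<tau>\<in>Autf S K. map \<tau> a = b"
  shows "sig S K a b \<in> Autf S K \<and> map (sig S K a b) a = b \<and>
      (\<forall>\<tau>\<in>Autf S K. map \<tau> a = b \<longrightarrow> (\<forall>m. bounds S m \<tau> \<longrightarrow> bounds S m (sig S K a b)))"
proof -
  have "\<exists>\<sigma>. \<sigma> \<in> Autf S K \<and> map \<sigma> a = b \<and>
      (\<forall>\<tau>\<in>Autf S K. map \<tau> a = b \<longrightarrow> (\<forall>m. bounds S m \<tau> \<longrightarrow> bounds S m \<sigma>))"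
  proof (cases "\<exists>m. \<exists>\<tau>\<in>Autf S K. map \<tau> a = b \<and> bounds S m \<tau>")
    case True
    define m0 where "m0 = (LEAST m. \<exists>\<tau>\<in>Autf S K. map \<tau> a = b \<and> bounds S m \<tau>)"
    obtain \<sigma> where \<sigma>: "\<sigma> \<in> Autf S K" "map \<sigma> a = b" "bounds S m0 \<sigma>"
      using LeastI_ex[OF True] unfolding m0_def by blast
    have "\<forall>\<tau>\<in>Autf S K. map \<tau> a = b \<longrightarrow> (\<forall>m. bounds S m \<tau> \<longrightarrow> bounds S m \<sigma>)"
    proof (intro ballI impI allI)
      fix \<tau> m assume "\<tau> \<in> Autf S K" "map \<tau> a = b" "bounds S m \<tau>"
      then have "m0 \<le> m" unfolding m0_def by (intro Least_le) blast
      then show "bounds S m \<sigma>" using \<sigma>(3) bounds_mono by blast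
    qed
    then show ?thesis using \<sigma> by blast
  next
    case False
    then show ?thesis using assms by blast
  qed
  then show ?thesis unfolding sig_def by (rule someI_ex)
qed

definition Q2 :: "('f, 'r, 'a, 'z) mstruct_scheme \<Rightarrow> 'a list \<Rightarrow> nat \<Rightarrow> 'a list \<Rightarrow> 'a list \<Rightarrow> bool" where
  "Q2 S a n c1 c2 \<longleftrightarrow> length c1 = length a \<and> length c2 = length a \<and> lascar_eq S (length a) c1 a
            \<and> lascar_eq S (length a) a c2 \<and> \<not> lpath S (length a) n c1 c2"

definition R3 :: "('f, 'r, 'a, 'z) mstruct_scheme \<Rightarrow> 'a list \<Rightarrow> 'a list \<Rightarrow> 'a list \<Rightarrow> nat \<Rightarrow> 'a list \<Rightarrow> bool" where
  "R3 S a b a' n b' \<longleftrightarrow> length b' = length a' \<and> lpath S (length a + length a') n (a @ a') (b @ b')"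

definition G1f where
  "G1f S K xs i j = sig S K (take i xs) (take j (drop i xs)) ` set (drop (i + j) xs)
     \<union> inv (sig S K (take i xs) (take j (drop i xs))) ` set (drop (i + j) xs)"

definition G1 where
  "G1 S K xs = (\<Union>i\<in>{..length xs}. \<Union>j\<in>{..length xs}. G1f S K xs i j)"

definition G2f where
  "G2f S xs n = (if \<exists>p. Q2 S xs n (fst p) (snd p)
      then set (fst (SOME p. Q2 S xs n (fst p) (snd p))) \<union> set (snd (SOME p. Q2 S xs n (fst p) (snd p))) else {})"

definition G2 where
  "G2 S xs = (\<Union>n. G2f S xs n)"

definition G3f where
  "G3f S xs i j n = (if \<exists>b'. R3 S (take i xs) (take j (drop i xs)) (drop (i + j) xs) n b'
     then set (SOME b'. R3 S (take i xs) (take j (drop i xs)) (drop (i + j) xs) n b') else {})"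

definition G3 where
  "G3 S xs = (\<Union>i\<in>{..length xs}. \<Union>j\<in>{..length xs}. \<Union>n. G3f S xs i j n)"

lemma G1_sub: "i \<le> length xs \<Longrightarrow> j \<le> length xs \<Longrightarrow> G1f S K xs i j \<subseteq> G1 S K xs"
  unfolding G1_def by blast

lemma G2_sub: "G2f S xs n \<subseteq> G2 S xs"
  unfolding G2_def by blast

lemma G3_sub: "i \<le> length xs \<Longrightarrow> j \<le> length xs \<Longrightarrow> G3f S xs i j n \<subseteq> G3 S xs"
  unfolding G3_def by blast

lemma countable_G: "countable (G1 S K xs \<union> G2 S xs \<union> G3 S xs)"
proof -
  have "countable (G1f S K xs i j)" for i j unfolding G1f_def by (simp add: countable_finite)
  moreover have "countable (G2f S xs n)" for n unfolding G2f_def by (simp add: countable_finite)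
  moreover have "countable (G3f S xs i j n)" for i j n unfolding G3f_def by (simp add: countable_finite)
  ultimately show ?thesis unfolding G1_def G2_def G3_def by (simp add: countable_UN)
qed

theorem lemma3p3:
  fixes S :: "('f, 'r, 'a) mstruct" and K :: "'k set" and A :: "'a set"
  assumes "countable (UNIV :: 'f set)" and "countable (UNIV :: 'r set)"
    and "monster S K"
    and "countable A"
  shows "(\<exists>M. nice S K M \<and> A \<subseteq> M) \<and> (\<exists>M. nice S K M)"
proof -
  have "\<exists>M. A \<subseteq> M \<and> countable M \<and> elem_sub S M \<and> (\<forall>xs. set xs \<subseteq> M \<longrightarrow> G1 S K xs \<union> G2 S xs \<union> G3 S xs \<subseteq> M)"
    by (rule LS_closure[OF assms(1,2) _ assms(4)]) (rule countable_G)
  then obtain M where M: "A \<subseteq> M" "countable M" "elem_sub S M"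
    "\<forall>xs. set xs \<subseteq> M \<longrightarrow> G1 S K xs \<union> G2 S xs \<union> G3 S xs \<subseteq> M"
    by (elim exE conjE)
  have c1: "\<exists>\<sigma>\<in>Autf S K. \<sigma> ` M = M \<and> map \<sigma> a = b \<and>
           (\<forall>\<tau>\<in>Autf S K. map \<tau> a = b \<longrightarrow> (\<forall>m. bounds S m \<tau> \<longrightarrow> bounds S m \<sigma>))"
    if ab: "set a \<subseteq> M" "set b \<subseteq> M" "length a = length b" "lascar_eq S (length a) a b" for a b
  proof -
    obtain n where "lpath S (length a) n a b" using ab(4) unfolding lascar_eq_def by blast
    then have "\<exists>\<tau>\<in>Autf S K. map \<tau> a = b" by (rule lpath_autf[OF assms(1,2,3)])
    note sp = sig_spec[OF this]
    let ?\<sigma> = "sig S K a b"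
    have bij: "bij ?\<sigma>" using sp Autf_bij by blast
    have cl: "?\<sigma> x \<in> M \<and> inv ?\<sigma> x \<in> M" if "x \<in> M" for x
    proof -
      let ?xs = "a @ b @ [x]"
      have "set ?xs \<subseteq> M" using \<open>set a \<subseteq> M\<close> \<open>set b \<subseteq> M\<close> that by auto
      then have "G1 S K ?xs \<subseteq> M" using M(4) by blast
      moreover have "?\<sigma> x \<in> G1f S K ?xs (length a) (length b) \<and> inv ?\<sigma> x \<in> G1f S K ?xs (length a) (length b)"
        unfolding G1f_def by simp
      moreover have "G1f S K ?xs (length a) (length b) \<subseteq> G1 S K ?xs" by (rule G1_sub) auto
      ultimately show ?thesis by blast
    qed
    have "?\<sigma> ` M = M"
    proof
      show "?\<sigma> ` M \<subseteq> M" using cl by blast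
      show "M \<subseteq> ?\<sigma> ` M"
      proof
        fix x assume "x \<in> M"
        then have "inv ?\<sigma> x \<in> M" using cl by blast
        moreover have "?\<sigma> (inv ?\<sigma> x) = x" using bij by (simp add: bij_is_surj surj_f_inv_f)
        ultimately show "x \<in> ?\<sigma> ` M" by (metis imageI)
      qed
    qed
    then show ?thesis using sp by blast
  qed
  have c2: "\<exists>c1 c2. set c1 \<subseteq> M \<and> set c2 \<subseteq> M \<and> length c1 = length a \<and> length c2 = length a
            \<and> lascar_eq S (length a) c1 a \<and> lascar_eq S (length a) a c2 \<and> \<not> lpath S (length a) n c1 c2"
    if h2: "set a \<subseteq> M" "\<exists>c1 c2. length c1 = length a \<and> length c2 = length a \<and> lascar_eq S (length a) c1 a
            \<and> lascar_eq S (length a) a c2 \<and> \<not> lpath S (length a) n c1 c2" for a n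
  proof -
    have ex: "\<exists>p. Q2 S a n (fst p) (snd p)" using h2(2) unfolding Q2_def by auto
    define p where "p = (SOME p. Q2 S a n (fst p) (snd p))"
    have Qp: "Q2 S a n (fst p) (snd p)" unfolding p_def by (rule someI_ex[OF ex])
    have "G2 S a \<subseteq> M" using M(4) h2(1) by blast
    moreover have "set (fst p) \<union> set (snd p) \<subseteq> G2f S a n" unfolding G2f_def p_def using ex by simp
    moreover have "G2f S a n \<subseteq> G2 S a" by (rule G2_sub)
    ultimately have "set (fst p) \<subseteq> M" "set (snd p) \<subseteq> M" by auto
    then show ?thesis using Qp unfolding Q2_def by blast
  qed
  have c3: "\<exists>b'. set b' \<subseteq> M \<and> length b' = length a' \<and> lpath S (length a + length a') n (a @ a') (b @ b')"
    if h3: "set a \<subseteq> M" "set b \<subseteq> M" "set a' \<subseteq> M" "length a = length b"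
       "\<exists>b'. length b' = length a' \<and> lpath S (length a + length a') n (a @ a') (b @ b')" for a b a' n
  proof -
    have ex: "\<exists>b'. R3 S a b a' n b'" using h3(5) unfolding R3_def by blast
    define b' where "b' = (SOME b'. R3 S a b a' n b')"
    have Rb: "R3 S a b a' n b'" unfolding b'_def by (rule someI_ex[OF ex])
    let ?xs = "a @ b @ a'"
    have "set ?xs \<subseteq> M" using h3(1-3) by auto
    then have "G3 S ?xs \<subseteq> M" using M(4) by blast
    moreover have "set b' \<subseteq> G3f S ?xs (length a) (length b) n"
      unfolding G3f_def using ex unfolding b'_def by simp
    moreover have "G3f S ?xs (length a) (length b) n \<subseteq> G3 S ?xs" by (rule G3_sub) auto
    ultimately have "set b' \<subseteq> M" by blast
    then show ?thesis using Rb unfolding R3_def by blast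
  qed
  have "nice S K M"
    unfolding nice_def
  proof (intro conjI)
    show "elem_sub S M" by (rule M(3))
    show "countable M" by (rule M(2))
  qed ((intro allI impI), (rule c1 c2 c3; assumption))+
  then show ?thesis using M(1) by blast
qed


end
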